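(* Let $m,n\ge 2$ and $p,q\ge 0$ be integers, and let $\bm{i}=(i_1,\dots,i_p),\bm{k}=(k_1,\dots,k_p)\in\{1,\dots,m\}^{\times p}$ and $\bm{j}=(j_1,\dots,j_q),\bm{l}=(l_1,\dots,l_q)\in\{1,\dots,n\}^{\times q}$. For each $\sigma\in\mathfrak{S}_{p+q}$, $$\sum_{s_1,\dots,s_q=1}^m\delta_\sigma(\bm{i}\cup\bm{s},\bm{k}\cup\bm{s})=\delta_{\mathrm{pr}_1(\sigma)}(\bm{i},\bm{k})\,m^{\kappa_1(\sigma)},\qquad \sum_{t_1,\dots,t_p=1}^n\delta_\sigma(\bm{t}\cup\bm{j},\bm{t}\cup\bm{l})=\delta_{\mathrm{pr}_2(\sigma)}(\bm{j},\bm{l})\,n^{\kappa_2(\sigma)}.$$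
   Context: $\bm{i}\cup\bm{s}$ denotes the concatenated sequence $(i_1,\dots,i_p,s_1,\dots,s_q)$ of length $p+q$, and similarly for $\bm{k}\cup\bm{s}$, $\bm{t}\cup\bm{j}=(t_1,\dots,t_p,j_1,\dots,j_q)$, $\bm{t}\cup\bm{l}$. For $\sigma\in\mathfrak{S}_d$ and sequences $\bm{a},\bm{b}$ of length $d$, $\delta_\sigma(\bm{a},\bm{b})=\prod_{r=1}^d\delta(a_{\sigma(r)},b_r)$ (Kronecker delta). For $\sigma\in\mathfrak{S}_{p+q}$: $\mathrm{pr}_1(\sigma)\in\mathfrak{S}_p$ is obtained by writing $\sigma$ as a product of disjoint cycles and erasing the letters $p+1,\dots,p+q$ from each cycle; $\mathrm{pr}_2(\sigma)\in\mathfrak{S}_q$ is obtained by erasing the letters $1,\dots,p$ from each cycle and relabeling $p+1,\dots,p+q$ as $1,\dots,q$. $\kappa_1(\sigma)$ is the number of cycles of $\sigma$ whose support is contained in $\{p+1,\dots,p+q\}$, and $\kappa_2(\sigma)$ the number of cycles whose support is contained in $\{1,\dots,p\}$. *)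

theory Defs
  imports "HOL-Combinatorics.Combinatorics" "HOL-Library.FuncSet"
begin

text \<open>Conventions: letters 1..d of the paper are 0..d-1 here; a permutation
  of S_d is a function sigma with sigma permutes {..<d}.
  Sequences of length d are functions nat => nat, only values at r < d matter.\<close>

definition kdelta :: "nat \<Rightarrow> nat \<Rightarrow> nat" where
  "kdelta a b = (if a = b then 1 else 0)"

definition delta_perm :: "nat \<Rightarrow> (nat \<Rightarrow> nat) \<Rightarrow> (nat \<Rightarrow> nat) \<Rightarrow> (nat \<Rightarrow> nat) \<Rightarrow> nat" where
  "delta_perm d \<sigma> a b = (\<Prod>r<d. kdelta (a (\<sigma> r)) (b r))"

definition concat_seq :: "nat \<Rightarrow> (nat \<Rightarrow> nat) \<Rightarrow> (nat \<Rightarrow> nat) \<Rightarrow> nat \<Rightarrow> nat" where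
  "concat_seq p a b = (\<lambda>r. if r < p then a r else b (r - p))"

text \<open>pr_1: erase the letters p+1..p+q (here p..p+q-1) from each cycle of sigma.
  In the cycle notation this sends x to the next letter in its cycle that was
  not erased, i.e. the first iterate sigma^k x (k > 0) lying in {..<p}.\<close>
definition pr1 :: "nat \<Rightarrow> (nat \<Rightarrow> nat) \<Rightarrow> nat \<Rightarrow> nat" where
  "pr1 p \<sigma> x = (if x < p then (\<sigma> ^^ (LEAST k. 0 < k \<and> (\<sigma> ^^ k) x < p)) x else x)"

text \<open>pr_2: erase the letters 1..p (here 0..p-1) from each cycle and relabel
  p+1..p+q (here p..p+q-1) as 1..q (here 0..q-1).\<close>
definition pr2 :: "nat \<Rightarrow> nat \<Rightarrow> (nat \<Rightarrow> nat) \<Rightarrow> nat \<Rightarrow> nat" where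
  "pr2 p q \<sigma> y = (if y < q then
      (\<sigma> ^^ (LEAST k. 0 < k \<and> p \<le> (\<sigma> ^^ k) (y + p))) (y + p) - p else y)"

text \<open>The cycles of sigma in S_d (fixed points count as 1-cycles): the orbits.\<close>
definition perm_cycles :: "nat \<Rightarrow> (nat \<Rightarrow> nat) \<Rightarrow> nat set set" where
  "perm_cycles d \<sigma> = {orbit \<sigma> x | x. x < d}"

definition kappa1 :: "nat \<Rightarrow> nat \<Rightarrow> (nat \<Rightarrow> nat) \<Rightarrow> nat" where
  "kappa1 p q \<sigma> = card {C \<in> perm_cycles (p + q) \<sigma>. C \<subseteq> {p..<p+q}}"

definition kappa2 :: "nat \<Rightarrow> nat \<Rightarrow> (nat \<Rightarrow> nat) \<Rightarrow> nat" where
  "kappa2 p q \<sigma> = card {C \<in> perm_cycles (p + q) \<sigma>. C \<subseteq> {..<p}}"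

end

theory Submission
  imports Defs
begin


definition nret :: "('a \<Rightarrow> 'a) \<Rightarrow> 'a set \<Rightarrow> 'a \<Rightarrow> nat" where
  "nret \<sigma> A x = (LEAST k. 0 < k \<and> (\<sigma> ^^ k) x \<in> A)"

definition ret :: "('a \<Rightarrow> 'a) \<Rightarrow> 'a set \<Rightarrow> 'a \<Rightarrow> 'a" where
  "ret \<sigma> A x = (\<sigma> ^^ nret \<sigma> A x) x"

lemma nret_props:
  assumes "0 < k" "(\<sigma> ^^ k) x \<in> A"
  shows "0 < nret \<sigma> A x" "(\<sigma> ^^ nret \<sigma> A x) x \<in> A" "nret \<sigma> A x \<le> k"
    "\<And>j. 0 < j \<Longrightarrow> j < nret \<sigma> A x \<Longrightarrow> (\<sigma> ^^ j) x \<notin> A"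
proof -
  have *: "0 < nret \<sigma> A x \<and> (\<sigma> ^^ nret \<sigma> A x) x \<in> A"
    unfolding nret_def by (rule LeastI[of _ k]) (use assms in auto)
  then show "0 < nret \<sigma> A x" "(\<sigma> ^^ nret \<sigma> A x) x \<in> A" by auto
  show "nret \<sigma> A x \<le> k" unfolding nret_def by (rule Least_le) (use assms in auto)
  fix j assume "0 < j" "j < nret \<sigma> A x"
  then show "(\<sigma> ^^ j) x \<notin> A" using not_less_Least[of j "\<lambda>k. 0 < k \<and> (\<sigma> ^^ k) x \<in> A"]
    unfolding nret_def by auto
qed

lemma nret_eq:
  assumes "0 < K" "(\<sigma> ^^ K) x \<in> A" "\<And>j. 0 < j \<Longrightarrow> j < K \<Longrightarrow> (\<sigma> ^^ j) x \<notin> A"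
  shows "nret \<sigma> A x = K"
  unfolding nret_def
  by (rule Least_equality) (use assms in \<open>auto simp: not_less[symmetric]\<close>)

lemma perm_period:
  assumes "permutation \<sigma>"
  obtains n where "0 < n" "(\<sigma> ^^ n) x = x"
  using permutation_self[OF assms] by blast

lemma ret_in:
  assumes "permutation \<sigma>" "x \<in> A"
  shows "ret \<sigma> A x \<in> A" "0 < nret \<sigma> A x"
proof -
  obtain n where "0 < n" "(\<sigma> ^^ n) x = x" using perm_period[OF assms(1)] by blast
  then show "ret \<sigma> A x \<in> A" "0 < nret \<sigma> A x" using nret_props[of n \<sigma> x A] assms
    unfolding ret_def by auto
qed

definition ncyc :: "('a \<Rightarrow> 'a) \<Rightarrow> 'a set \<Rightarrow> 'a set \<Rightarrow> nat" where
  "ncyc \<sigma> D A = card {C \<in> {orbit \<sigma> z | z. z \<in> D}. C \<inter> A = {}}"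

lemma ncyc_insert:
  assumes "\<sigma> permutes D" "finite D" "y \<in> D" "y \<notin> A"
  shows "ncyc \<sigma> D A = ncyc \<sigma> D (insert y A) + (if orbit \<sigma> y \<inter> A = {} then 1 else 0)"
proof -
  have perm: "permutation \<sigma>" using assms permutation_permutes by blast
  let ?S = "\<lambda>A. {C \<in> {orbit \<sigma> z | z. z \<in> D}. C \<inter> A = {}}"
  have fin: "finite (?S A)"
    by (rule finite_subset[of _ "(\<lambda>z. orbit \<sigma> z) ` D"]) (use assms in auto)
  have eqo: "y \<in> orbit \<sigma> z \<longleftrightarrow> orbit \<sigma> z = orbit \<sigma> y" for z
    using orbit_cyclic_eq3[OF cyclic_on_orbit[OF assms(1,2)], of y z]
      permutation_self_in_orbit[OF perm, of y] by auto
  have 1: "?S (insert y A) = ?S A - {orbit \<sigma> y}"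
    using eqo by auto
  show ?thesis
  proof (cases "orbit \<sigma> y \<inter> A = {}")
    case True
    then have m: "orbit \<sigma> y \<in> ?S A" using assms by auto
    then have "card (?S A) > 0" using fin card_gt_0_iff by blast
    then show ?thesis unfolding ncyc_def 1 using True fin m
      by (simp add: card_Diff_singleton)
  next
    case False
    then have "orbit \<sigma> y \<notin> ?S A" by auto
    then show ?thesis unfolding ncyc_def 1 using False by simp
  qed
qed



lemma funpow_inj_eq:
  assumes "permutation \<sigma>" "(\<sigma> ^^ n) a = (\<sigma> ^^ n) b" shows "a = b"
proof -
  have "inj \<sigma>" using assms(1) by (simp add: permutation_bijective bij_is_inj)
  then have "inj (\<sigma> ^^ n)" by simp
  then show ?thesis using assms(2) by (simp add: inj_eq)
qed

lemma fpa: "(f ^^ a) ((f ^^ b) z) = (f ^^ (a + b)) z"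
  by (simp add: funpow_add)

lemma step_comb:
  fixes f g :: "'a \<Rightarrow> nat"
  assumes sp: "\<sigma> permutes D" and fD: "finite D" and AD: "A \<subseteq> D" and yD: "y \<in> D"
    and yA: "y \<notin> A" and fV: "finite V" and gV: "\<forall>x\<in>A. g x \<in> V"
  shows "(\<Sum>v\<in>V. \<Prod>x\<in>insert y A. kdelta ((f(y:=v)) (ret \<sigma> (insert y A) x)) ((g(y:=v)) x))
           * card V ^ ncyc \<sigma> D (insert y A)
         = (\<Prod>x\<in>A. kdelta (f (ret \<sigma> A x)) (g x)) * card V ^ ncyc \<sigma> D A"
proof -
  have perm: "permutation \<sigma>" using sp fD permutation_permutes by blast
  have fA: "finite A" using AD fD finite_subset by blast
  have nc: "ncyc \<sigma> D A = ncyc \<sigma> D (insert y A) + (if orbit \<sigma> y \<inter> A = {} then 1 else 0)"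
    by (rule ncyc_insert[OF sp fD yD yA])
  have selfo: "\<And>u. u \<in> orbit \<sigma> u" using permutation_self_in_orbit[OF perm] .
  show ?thesis
  proof (cases "orbit \<sigma> y \<inter> A = {}")
    case True
    have rety: "ret \<sigma> (insert y A) y = y"
    proof -
      obtain n where n: "0 < n" "(\<sigma> ^^ n) y = y" using perm_period[OF perm] by blast
      have "ret \<sigma> (insert y A) y \<in> insert y A" "0 < nret \<sigma> (insert y A) y"
        using nret_props[of n \<sigma> y "insert y A"] n unfolding ret_def by auto
      moreover have "ret \<sigma> (insert y A) y \<in> orbit \<sigma> y"
        using calculation(2) unfolding ret_def orbit_altdef by blast
      ultimately show ?thesis using True by auto
    qed
    have retx: "ret \<sigma> (insert y A) x = ret \<sigma> A x" if xA: "x \<in> A" for x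
    proof -
      have K: "0 < nret \<sigma> A x" "(\<sigma> ^^ nret \<sigma> A x) x \<in> A"
        using ret_in[OF perm xA] unfolding ret_def by auto
      have "nret \<sigma> (insert y A) x = nret \<sigma> A x"
      proof (rule nret_eq)
        fix j assume j: "0 < j" "j < nret \<sigma> A x"
        have "(\<sigma> ^^ j) x \<notin> A" using nret_props(4)[OF K j] .
        moreover have "(\<sigma> ^^ j) x \<noteq> y"
        proof
          assume "(\<sigma> ^^ j) x = y"
          then have "y \<in> orbit \<sigma> x" using j unfolding orbit_altdef by blast
          then have "x \<in> orbit \<sigma> y" using orbit_swap[OF selfo] by blast
          then show False using True xA by blast
        qed
        ultimately show "(\<sigma> ^^ j) x \<notin> insert y A" by blast
      qed (use K in auto)
      then show ?thesis unfolding ret_def by simp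
    qed
    have retA: "x \<in> A \<Longrightarrow> ret \<sigma> A x \<in> A" for x using ret_in[OF perm] by blast
    have "(\<Prod>x\<in>insert y A. kdelta ((f(y:=v)) (ret \<sigma> (insert y A) x)) ((g(y:=v)) x))
        = (\<Prod>x\<in>A. kdelta (f (ret \<sigma> A x)) (g x))" for v
    proof -
      have "(\<Prod>x\<in>insert y A. kdelta ((f(y:=v)) (ret \<sigma> (insert y A) x)) ((g(y:=v)) x))
         = kdelta v v * (\<Prod>x\<in>A. kdelta ((f(y:=v)) (ret \<sigma> (insert y A) x)) ((g(y:=v)) x))"
        using fA yA rety by simp
      also have "\<dots> = (\<Prod>x\<in>A. kdelta (f (ret \<sigma> A x)) (g x))"
        using retx retA yA by (auto simp: kdelta_def[of v v] intro!: prod.cong)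
      finally show ?thesis .
    qed
    then show ?thesis using nc True by (simp add: power_Suc)
  next
    case False
    then obtain z where zA: "z \<in> A" and zo: "z \<in> orbit \<sigma> y" by blast
    have "y \<in> orbit \<sigma> z" using orbit_swap[OF selfo zo] .
    then obtain m where m: "0 < m" "(\<sigma> ^^ m) z = y" unfolding orbit_altdef by blast
    define J where "J = {j. j < m \<and> (\<sigma> ^^ j) z \<in> A}"
    have J0: "0 \<in> J" using zA m unfolding J_def by simp
    have finJ: "finite J" unfolding J_def by simp
    define js where "js = Max J"
    have js: "js \<in> J" "\<And>j. j \<in> J \<Longrightarrow> j \<le> js" using J0 finJ unfolding js_def by (auto intro: Max_in)
    define x1 where "x1 = (\<sigma> ^^ js) z"
    have x1A: "x1 \<in> A" and jsm: "js < m" using js(1) unfolding J_def x1_def by auto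
    have x1y: "(\<sigma> ^^ (m - js)) x1 = y"
      using m jsm unfolding x1_def fpa by simp
    have x1n: "(\<sigma> ^^ i) x1 \<notin> A" if "0 < i" "i < m - js" for i
    proof
      assume "(\<sigma> ^^ i) x1 \<in> A"
      then have "(\<sigma> ^^ (i + js)) z \<in> A" unfolding x1_def by (simp add: funpow_add)
      then have "i + js \<in> J" using that unfolding J_def by auto
      then show False using js(2) that by fastforce
    qed
    define x0 where "x0 = x1"
    define j0 where "j0 = nret \<sigma> {y} x1"
    have j0: "0 < j0" "(\<sigma> ^^ j0) x0 = y" "j0 \<le> m - js"
      "\<And>i. 0 < i \<Longrightarrow> i < j0 \<Longrightarrow> (\<sigma> ^^ i) x0 \<noteq> y"
      using nret_props[of "m - js" \<sigma> x1 "{y}"] x1y jsm unfolding j0_def x0_def by auto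
    have j0A: "\<And>i. 0 < i \<Longrightarrow> i < j0 \<Longrightarrow> (\<sigma> ^^ i) x0 \<notin> A"
      using x1n j0(3) unfolding x0_def by auto
    have x0A: "x0 \<in> A" using x1A x0_def by simp
    define K where "K = nret \<sigma> A x0"
    have K12: "0 < K" "(\<sigma> ^^ K) x0 \<in> A"
      using ret_in[OF perm x0A] unfolding ret_def K_def by auto
    have K: "0 < K" "(\<sigma> ^^ K) x0 \<in> A" "\<And>j. 0 < j \<Longrightarrow> j < K \<Longrightarrow> (\<sigma> ^^ j) x0 \<notin> A"
      using K12 nret_props(4)[OF K12] unfolding K_def by auto
    have j0K: "j0 < K"
    proof (rule ccontr)
      assume "\<not> j0 < K"
      then have "K < j0 \<or> K = j0" by auto
      then show False using K j0A j0 yA by auto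
    qed
    have retx0: "ret \<sigma> (insert y A) x0 = y"
    proof -
      have "nret \<sigma> (insert y A) x0 = j0"
        by (rule nret_eq) (use j0 j0A in auto)
      then show ?thesis using j0 unfolding ret_def by simp
    qed
    have rety: "ret \<sigma> (insert y A) y = ret \<sigma> A x0"
    proof -
      have eq: "(\<sigma> ^^ i) y = (\<sigma> ^^ (i + j0)) x0" for i
        using j0(2) fpa[where f=\<sigma> and a=i and b=j0 and z=x0] by simp
      have "nret \<sigma> (insert y A) y = K - j0"
      proof (rule nret_eq)
        show "0 < K - j0" using j0K by simp
        show "(\<sigma> ^^ (K - j0)) y \<in> insert y A" using eq[of "K - j0"] j0K K by simp
        fix i assume i: "0 < i" "i < K - j0"
        have "(\<sigma> ^^ i) y \<notin> A" using eq[of i] K(3)[of "i + j0"] i by simp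
        moreover have "(\<sigma> ^^ i) y \<noteq> y"
        proof
          assume "(\<sigma> ^^ i) y = y"
          moreover have "(\<sigma> ^^ j0) ((\<sigma> ^^ i) x0) = (\<sigma> ^^ i) y"
            using eq[of i] fpa[where f=\<sigma> and a=j0 and b=i and z=x0] by (simp add: add.commute)
          ultimately have "(\<sigma> ^^ j0) ((\<sigma> ^^ i) x0) = (\<sigma> ^^ j0) x0"
            using j0(2) by simp
          then have "(\<sigma> ^^ i) x0 = x0" using funpow_inj_eq[OF perm] by blast
          then show False using K(3)[of i] i x0A by (metis diff_le_self less_le_trans)
        qed
        ultimately show "(\<sigma> ^^ i) y \<notin> insert y A" by simp
      qed
      then show ?thesis unfolding ret_def K_def[symmetric] using eq[of "K - j0"] j0K by simp
    qed
    have retx: "ret \<sigma> (insert y A) x = ret \<sigma> A x" if xA: "x \<in> A" and xx0: "x \<noteq> x0" for x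
    proof -
      have K': "0 < nret \<sigma> A x" "(\<sigma> ^^ nret \<sigma> A x) x \<in> A"
        using ret_in[OF perm xA] unfolding ret_def by auto
      have "nret \<sigma> (insert y A) x = nret \<sigma> A x"
      proof (rule nret_eq)
        fix j assume j: "0 < j" "j < nret \<sigma> A x"
        have "(\<sigma> ^^ j) x \<notin> A" using nret_props(4)[OF K' j] .
        moreover have "(\<sigma> ^^ j) x \<noteq> y"
        proof
          assume jy: "(\<sigma> ^^ j) x = y"
          show False
          proof (cases "j \<le> j0")
            case True
            have "(\<sigma> ^^ j) ((\<sigma> ^^ (j0 - j)) x0) = (\<sigma> ^^ j) x"
              using jy j0(2) True by (simp add: fpa)
            then have "(\<sigma> ^^ (j0 - j)) x0 = x" using funpow_inj_eq[OF perm] by blast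
            then show False using xx0 j0A[of "j0 - j"] xA j True by (cases "j0 = j") auto
          next
            case False
            have "(\<sigma> ^^ j0) ((\<sigma> ^^ (j - j0)) x) = (\<sigma> ^^ j0) x0"
              using jy j0(2) False by (simp add: fpa)
            then have "(\<sigma> ^^ (j - j0)) x = x0" using funpow_inj_eq[OF perm] by blast
            then show False using nret_props(4)[OF K', of "j - j0"] x0A j False by (simp add: less_imp_diff_less)
          qed
        qed
        ultimately show "(\<sigma> ^^ j) x \<notin> insert y A" by blast
      qed (use K' in auto)
      then show ?thesis unfolding ret_def by simp
    qed
    have retA: "x \<in> A \<Longrightarrow> ret \<sigma> A x \<in> A" for x using ret_in[OF perm] by blast
    define r0 where "r0 = ret \<sigma> A x0"
    have r0A: "r0 \<in> A" using retA x0A r0_def by simp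
    let ?R = "\<Prod>x\<in>A - {x0}. kdelta (f (ret \<sigma> A x)) (g x)"
    have pv: "(\<Prod>x\<in>insert y A. kdelta ((f(y:=v)) (ret \<sigma> (insert y A) x)) ((g(y:=v)) x))
        = kdelta (f r0) v * kdelta v (g x0) * ?R" for v
    proof -
      have A0: "A = insert x0 (A - {x0})" using x0A by blast
      have "(\<Prod>x\<in>insert y A. kdelta ((f(y:=v)) (ret \<sigma> (insert y A) x)) ((g(y:=v)) x))
         = kdelta ((f(y:=v)) (ret \<sigma> (insert y A) y)) v *
           (kdelta ((f(y:=v)) (ret \<sigma> (insert y A) x0)) ((g(y:=v)) x0) *
           (\<Prod>x\<in>A - {x0}. kdelta ((f(y:=v)) (ret \<sigma> (insert y A) x)) ((g(y:=v)) x)))"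
        unfolding prod.insert[OF fA yA] prod.remove[OF fA x0A] by (simp only: fun_upd_same)
      also have "\<dots> = kdelta (f r0) v * (kdelta v (g x0) * ?R)"
        using rety retx0 r0A yA x0A r0_def
        by (intro arg_cong2[where f = "(*)"] prod.cong refl) (auto simp: retx retA)
      finally show ?thesis by (simp add: mult.assoc)
    qed
    have sv: "(\<Sum>v\<in>V. kdelta (f r0) v * kdelta v (g x0)) = kdelta (f r0) (g x0)"
    proof -
      have "(\<Sum>v\<in>V. kdelta (f r0) v * kdelta v (g x0))
          = (\<Sum>v\<in>V. if v = g x0 then kdelta (f r0) (g x0) else 0)"
        by (rule sum.cong) (auto simp: kdelta_def)
      also have "\<dots> = kdelta (f r0) (g x0)" using fV gV x0A by simp
      finally show ?thesis .
    qed
    have "(\<Prod>x\<in>A. kdelta (f (ret \<sigma> A x)) (g x)) = kdelta (f r0) (g x0) * ?R"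
      unfolding prod.remove[OF fA x0A] r0_def by simp
    then show ?thesis using nc False pv sv by (simp add: sum_distrib_right[symmetric])
  qed
qed



definition extf :: "'a set \<Rightarrow> ('a \<Rightarrow> nat) \<Rightarrow> ('a \<Rightarrow> nat) \<Rightarrow> 'a \<Rightarrow> nat" where
  "extf A f s r = (if r \<in> A then f r else s r)"

lemma main_gen:
  fixes f g :: "'a \<Rightarrow> nat"
  assumes sp: "\<sigma> permutes D" and fD: "finite D" and fV: "finite V"
  shows "finite B \<Longrightarrow> B \<subseteq> D \<Longrightarrow> (\<forall>x\<in>D - B. g x \<in> V) \<Longrightarrow>
    (\<Sum>s\<in>B \<rightarrow>\<^sub>E V. \<Prod>r\<in>D. kdelta (extf (D - B) f s (\<sigma> r)) (extf (D - B) g s r))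
    = (\<Prod>x\<in>D - B. kdelta (f (ret \<sigma> (D - B) x)) (g x)) * card V ^ ncyc \<sigma> D (D - B)"
proof (induction B arbitrary: f g rule: finite_induct)
  case empty
  have perm: "permutation \<sigma>" using sp fD permutation_permutes by blast
  have sD: "r \<in> D \<Longrightarrow> \<sigma> r \<in> D" for r using permutes_in_image[OF sp] by blast
  have ret1: "ret \<sigma> D x = \<sigma> x" if "x \<in> D" for x
  proof -
    have "nret \<sigma> D x = 1" by (rule nret_eq) (use sD that in auto)
    then show ?thesis unfolding ret_def by simp
  qed
  have nc0: "ncyc \<sigma> D D = 0"
  proof -
    have "{C \<in> {orbit \<sigma> z | z. z \<in> D}. C \<inter> D = {}} = {}"
      using permutation_self_in_orbit[OF perm] by blast
    then show ?thesis unfolding ncyc_def by (metis card.empty)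
  qed
  show ?case using sD by (simp add: extf_def ret1 nc0)
next
  case (insert y B)
  let ?A = "D - insert y B"
  have yD: "y \<in> D" and BD: "B \<subseteq> D" using insert by auto
  have A': "D - B = insert y ?A" using yD insert(2) by blast
  have yA: "y \<notin> ?A" by blast
  have e: "extf ?A f (h(y:=v)) = extf (D - B) (f(y:=v)) h" for f h v
    unfolding A' extf_def by (auto simp: fun_eq_iff)
  have "(\<Sum>s\<in>insert y B \<rightarrow>\<^sub>E V. \<Prod>r\<in>D. kdelta (extf ?A f s (\<sigma> r)) (extf ?A g s r))
      = (\<Sum>(v,h)\<in>V \<times> (B \<rightarrow>\<^sub>E V). \<Prod>r\<in>D. kdelta (extf ?A f (h(y:=v)) (\<sigma> r)) (extf ?A g (h(y:=v)) r))"
    unfolding PiE_insert_eq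
    by (subst sum.reindex[OF inj_combinator[OF insert(2)]]) (simp add: case_prod_unfold)
  also have "\<dots> = (\<Sum>v\<in>V. \<Sum>h\<in>B \<rightarrow>\<^sub>E V. \<Prod>r\<in>D. kdelta (extf (D - B) (f(y:=v)) h (\<sigma> r)) (extf (D - B) (g(y:=v)) h r))"
    unfolding e sum.cartesian_product by simp
  also have "\<dots> = (\<Sum>v\<in>V. (\<Prod>x\<in>D - B. kdelta ((f(y:=v)) (ret \<sigma> (D - B) x)) ((g(y:=v)) x)) * card V ^ ncyc \<sigma> D (D - B))"
  proof (rule sum.cong[OF refl])
    fix v assume "v \<in> V"
    show "(\<Sum>h\<in>B \<rightarrow>\<^sub>E V. \<Prod>r\<in>D. kdelta (extf (D - B) (f(y:=v)) h (\<sigma> r)) (extf (D - B) (g(y:=v)) h r))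
      = (\<Prod>x\<in>D - B. kdelta ((f(y:=v)) (ret \<sigma> (D - B) x)) ((g(y:=v)) x)) * card V ^ ncyc \<sigma> D (D - B)"
    proof (rule insert.IH[OF BD])
      show "\<forall>x\<in>D - B. (g(y:=v)) x \<in> V" using insert.prems(2) A' \<open>v \<in> V\<close> by auto
    qed
  qed
  also have "\<dots> = (\<Sum>v\<in>V. \<Prod>x\<in>insert y ?A. kdelta ((f(y:=v)) (ret \<sigma> (insert y ?A) x)) ((g(y:=v)) x))
           * card V ^ ncyc \<sigma> D (insert y ?A)"
    unfolding A' by (simp add: sum_distrib_right)
  also have "\<dots> = (\<Prod>x\<in>?A. kdelta (f (ret \<sigma> ?A x)) (g x)) * card V ^ ncyc \<sigma> D ?A"
    by (rule step_comb[OF sp fD _ yD yA fV]) (use insert.prems in auto)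
  finally show ?case .
qed



lemma orbit_subD:
  assumes sp: "\<sigma> permutes D" and "z \<in> D" shows "orbit \<sigma> z \<subseteq> D"
  using permutes_in_funpow_image[OF sp assms(2)] unfolding orbit_altdef by blast

theorem lemma2p4:
  fixes m n p q :: nat and i k j l \<sigma> :: "nat \<Rightarrow> nat"
  assumes "m \<ge> 2" and "n \<ge> 2"
    and "i \<in> {..<p} \<rightarrow> {1..m}" and "k \<in> {..<p} \<rightarrow> {1..m}"
    and "j \<in> {..<q} \<rightarrow> {1..n}" and "l \<in> {..<q} \<rightarrow> {1..n}"
    and "\<sigma> permutes {..<p + q}"
  shows "((\<Sum>s \<in> {..<q} \<rightarrow>\<^sub>E {1..m}.
            delta_perm (p + q) \<sigma> (concat_seq p i s) (concat_seq p k s))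
           = delta_perm p (pr1 p \<sigma>) i k * m ^ kappa1 p q \<sigma>)
         \<and> ((\<Sum>t \<in> {..<p} \<rightarrow>\<^sub>E {1..n}.
            delta_perm (p + q) \<sigma> (concat_seq p t j) (concat_seq p t l))
           = delta_perm q (pr2 p q \<sigma>) j l * n ^ kappa2 p q \<sigma>)"
proof
  let ?D = "{..<p + q}"
  have sp: "\<sigma> permutes ?D" using assms(7) .
  have fD: "finite ?D" by simp
  have sD: "r < p + q \<Longrightarrow> \<sigma> r < p + q" for r using permutes_in_image[OF sp] by auto
  have powD: "x \<in> ?D \<Longrightarrow> (\<sigma> ^^ t) x \<in> ?D" for x t using permutes_in_funpow_image[OF sp] by blast
  let ?B = "{p..<p+q}"
  have DB1: "?D - ?B = {..<p}" by auto
  define \<phi> where "\<phi> = (\<lambda>s'::nat\<Rightarrow>nat. \<lambda>t. if t < q then s' (t + p) else undefined)"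
  define \<psi> where "\<psi> = (\<lambda>s::nat\<Rightarrow>nat. \<lambda>x. if x \<in> ?B then s (x - p) else undefined)"
  have bij: "bij_betw \<phi> (?B \<rightarrow>\<^sub>E {1..m}) ({..<q} \<rightarrow>\<^sub>E {1..m})"
  proof (rule bij_betw_byWitness[where f' = \<psi>])
    show "\<forall>a\<in>?B \<rightarrow>\<^sub>E {1..m}. \<psi> (\<phi> a) = a"
      unfolding \<phi>_def \<psi>_def by (auto simp: fun_eq_iff PiE_def extensional_def)
    show "\<forall>a\<in>{..<q} \<rightarrow>\<^sub>E {1..m}. \<phi> (\<psi> a) = a"
      unfolding \<phi>_def \<psi>_def by (auto simp: fun_eq_iff PiE_def extensional_def)
    show "\<phi> ` (?B \<rightarrow>\<^sub>E {1..m}) \<subseteq> {..<q} \<rightarrow>\<^sub>E {1..m}"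
      unfolding \<phi>_def by (auto simp: PiE_def extensional_def Pi_def)
    show "\<psi> ` ({..<q} \<rightarrow>\<^sub>E {1..m}) \<subseteq> ?B \<rightarrow>\<^sub>E {1..m}"
      unfolding \<psi>_def by (auto simp: PiE_def extensional_def Pi_def)
  qed
  have cs1: "concat_seq p a (\<phi> s') u = extf {..<p} a s' u" if "u < p + q" for a s' u
    using that unfolding concat_seq_def extf_def \<phi>_def by auto
  have "(\<Sum>s \<in> {..<q} \<rightarrow>\<^sub>E {1..m}. delta_perm (p + q) \<sigma> (concat_seq p i s) (concat_seq p k s))
      = (\<Sum>s' \<in> ?B \<rightarrow>\<^sub>E {1..m}. delta_perm (p + q) \<sigma> (concat_seq p i (\<phi> s')) (concat_seq p k (\<phi> s')))"
    by (rule sum.reindex_bij_betw[OF bij, symmetric])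
  also have "\<dots> = (\<Sum>s' \<in> ?B \<rightarrow>\<^sub>E {1..m}. \<Prod>r\<in>?D. kdelta (extf (?D - ?B) i s' (\<sigma> r)) (extf (?D - ?B) k s' r))"
    unfolding delta_perm_def DB1 lessThan_iff[symmetric]
    by (intro sum.cong prod.cong refl) (use sD in \<open>simp add: cs1\<close>)
  also have "\<dots> = (\<Prod>x\<in>?D - ?B. kdelta (i (ret \<sigma> (?D - ?B) x)) (k x)) * card {1..m} ^ ncyc \<sigma> ?D (?D - ?B)"
    by (rule main_gen[OF sp fD]) (use assms(4) in auto)
  also have "\<dots> = delta_perm p (pr1 p \<sigma>) i k * m ^ kappa1 p q \<sigma>"
  proof -
    have "(\<Prod>x\<in>?D - ?B. kdelta (i (ret \<sigma> (?D - ?B) x)) (k x)) = delta_perm p (pr1 p \<sigma>) i k"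
      unfolding DB1 delta_perm_def
      by (intro prod.cong refl) (simp add: pr1_def ret_def nret_def)
    moreover have "ncyc \<sigma> ?D (?D - ?B) = kappa1 p q \<sigma>"
    proof -
      have "{C \<in> {orbit \<sigma> z | z. z \<in> ?D}. C \<inter> (?D - ?B) = {}}
          = {C \<in> perm_cycles (p + q) \<sigma>. C \<subseteq> {p..<p+q}}"
        unfolding perm_cycles_def DB1 using orbit_subD[OF sp] by fastforce
      then show ?thesis unfolding ncyc_def kappa1_def by simp
    qed
    ultimately show ?thesis by simp
  qed
  finally show "(\<Sum>s \<in> {..<q} \<rightarrow>\<^sub>E {1..m}. delta_perm (p + q) \<sigma> (concat_seq p i s) (concat_seq p k s))
      = delta_perm p (pr1 p \<sigma>) i k * m ^ kappa1 p q \<sigma>" .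
next
  let ?D = "{..<p + q}"
  have sp: "\<sigma> permutes ?D" using assms(7) .
  have fD: "finite ?D" by simp
  have sD: "r < p + q \<Longrightarrow> \<sigma> r < p + q" for r using permutes_in_image[OF sp] by auto
  have powD: "x \<in> ?D \<Longrightarrow> (\<sigma> ^^ t) x \<in> ?D" for x t using permutes_in_funpow_image[OF sp] by blast
  let ?B = "{..<p}"
  let ?A = "{p..<p+q}"
  have DB: "?D - ?B = ?A" by auto
  define j' where "j' = (\<lambda>u. j (u - p))"
  define l' where "l' = (\<lambda>u. l (u - p))"
  have cs: "concat_seq p t a u = extf ?A (\<lambda>u. a (u - p)) t u" if "u < p + q" for a t u
    using that unfolding concat_seq_def extf_def by auto
  have "(\<Sum>t \<in> ?B \<rightarrow>\<^sub>E {1..n}. delta_perm (p + q) \<sigma> (concat_seq p t j) (concat_seq p t l))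
      = (\<Sum>t \<in> ?B \<rightarrow>\<^sub>E {1..n}. \<Prod>r\<in>?D. kdelta (extf (?D - ?B) j' t (\<sigma> r)) (extf (?D - ?B) l' t r))"
    unfolding delta_perm_def DB lessThan_iff[symmetric] j'_def l'_def
    by (intro sum.cong prod.cong refl) (use sD in \<open>simp add: cs\<close>)
  also have "\<dots> = (\<Prod>x\<in>?D - ?B. kdelta (j' (ret \<sigma> (?D - ?B) x)) (l' x)) * card {1..n} ^ ncyc \<sigma> ?D (?D - ?B)"
  proof (rule main_gen[OF sp fD])
    show "\<forall>x\<in>?D - ?B. l' x \<in> {1..n}"
    proof
      fix x assume "x \<in> ?D - ?B"
      then have "x - p \<in> {..<q}" by auto
      then show "l' x \<in> {1..n}" using assms(6) unfolding l'_def by blast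
    qed
  qed auto
  also have "\<dots> = delta_perm q (pr2 p q \<sigma>) j l * n ^ kappa2 p q \<sigma>"
  proof -
    have "(\<Prod>x\<in>?A. kdelta (j' (ret \<sigma> ?A x)) (l' x)) = (\<Prod>y\<in>{..<q}. kdelta (j' (ret \<sigma> ?A (y + p))) (l' (y + p)))"
    proof -
      have "?A = (\<lambda>y. y + p) ` {..<q}"
      proof
        show "?A \<subseteq> (\<lambda>y. y + p) ` {..<q}"
        proof
          fix x assume "x \<in> ?A"
          then have "x = (x - p) + p" "x - p \<in> {..<q}" by auto
          then show "x \<in> (\<lambda>y. y + p) ` {..<q}" by (rule image_eqI)
        qed
      qed auto
      then show ?thesis by (simp add: prod.reindex)
    qed
    also have "\<dots> = delta_perm q (pr2 p q \<sigma>) j l"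
      unfolding delta_perm_def
    proof (intro prod.cong refl)
      fix y assume y: "y \<in> {..<q}"
      have yD: "y + p \<in> ?D" using y by auto
      have "(\<lambda>t. 0 < t \<and> (\<sigma> ^^ t) (y + p) \<in> ?A) = (\<lambda>t. 0 < t \<and> p \<le> (\<sigma> ^^ t) (y + p))"
        using powD[OF yD] by (auto simp: fun_eq_iff)
      then have "ret \<sigma> ?A (y + p) - p = pr2 p q \<sigma> y"
        unfolding ret_def nret_def pr2_def using y by simp
      then show "kdelta (j' (ret \<sigma> ?A (y + p))) (l' (y + p)) = kdelta (j (pr2 p q \<sigma> y)) (l y)"
        unfolding j'_def l'_def by simp
    qed
    finally have 1: "(\<Prod>x\<in>?A. kdelta (j' (ret \<sigma> ?A x)) (l' x)) = delta_perm q (pr2 p q \<sigma>) j l" .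
    have "ncyc \<sigma> ?D ?A = kappa2 p q \<sigma>"
    proof -
      have "{C \<in> {orbit \<sigma> z | z. z \<in> ?D}. C \<inter> ?A = {}}
          = {C \<in> perm_cycles (p + q) \<sigma>. C \<subseteq> {..<p}}"
      proof -
        have key: "(orbit \<sigma> z \<inter> ?A = {}) = (orbit \<sigma> z \<subseteq> {..<p})" if "z \<in> ?D" for z
        proof -
          have "orbit \<sigma> z \<subseteq> ?D" using orbit_subD[OF sp that] .
          then show ?thesis by (auto simp: subset_iff disjoint_iff)
        qed
        show ?thesis unfolding perm_cycles_def using key by auto
      qed
      then show ?thesis unfolding ncyc_def kappa2_def by simp
    qed
    then show ?thesis using 1 DB by simp
  qed
  finally show "(\<Sum>t \<in> {..<p} \<rightarrow>\<^sub>E {1..n}. delta_perm (p + q) \<sigma> (concat_seq p t j) (concat_seq p t l))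
      = delta_perm q (pr2 p q \<sigma>) j l * n ^ kappa2 p q \<sigma>" .
qed

end
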